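(* Let $R_k(n)$ denote the number of distinct languages denoted by regular expressions of ordinary length exactly $n$ over a $k$-letter alphabet. Then $R_1(n) = \Omega(1.3247^n)$ and $R_2(n) = \Omega(2.102374^n)$ as $n \to \infty$.
   Context: A regular expression over a finite alphabet $\Sigma$ is a (syntactically valid) string over $\Sigma \cup \{+, *, (, ), \epsilon, \emptyset\}$ built in the usual way from the constants $\emptyset$, $\epsilon$ and $a \in \Sigma$ using union $+$, concatenation (written by juxtaposition) and Kleene star $*$, with parentheses, under the usual precedence rules (star binds tighter than concatenation, which binds tighter than union); it denotes a regular language in the standard way. The ordinary length of a regular expression is the total number of symbols in it, including parentheses, $\epsilon$, $\emptyset$ and operator symbols, counted with multiplicity (e.g. $(0+10)*(1+\epsilon)$ has ordinary length 12). *)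

theory Defs
  imports Main "HOL-Library.Landau_Symbols"
begin

text \<open>Symbols of regular expressions over the alphabet {0,...,k-1} (letters are Sym a, a < k).\<close>
datatype rsym = Sym nat | PlusS | StarS | LParS | RParS | EpsS | EmptyS

definition conc :: "nat list set \<Rightarrow> nat list set \<Rightarrow> nat list set" where
  "conc A B = {u @ v | u v. u \<in> A \<and> v \<in> B}"

inductive_set kstar :: "nat list set \<Rightarrow> nat list set" for A where
  kstar_Nil: "[] \<in> kstar A"
| kstar_app: "u \<in> A \<Longrightarrow> v \<in> kstar A \<Longrightarrow> u @ v \<in> kstar A"

text \<open>Unambiguous grammar of syntactically valid regular expressions with the usual
precedences (star > concatenation > union), together with their denoted language:
  E ::= T | E + T,   T ::= F | T F,   F ::= A | F*,   A ::= \<emptyset> | \<epsilon> | a | (E).\<close>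
inductive rexE :: "nat \<Rightarrow> rsym list \<Rightarrow> nat list set \<Rightarrow> bool"
  and rexT :: "nat \<Rightarrow> rsym list \<Rightarrow> nat list set \<Rightarrow> bool"
  and rexF :: "nat \<Rightarrow> rsym list \<Rightarrow> nat list set \<Rightarrow> bool"
  and rexA :: "nat \<Rightarrow> rsym list \<Rightarrow> nat list set \<Rightarrow> bool"
  for k :: nat where
  E_T: "rexT k s L \<Longrightarrow> rexE k s L"
| E_plus: "rexE k s L \<Longrightarrow> rexT k t M \<Longrightarrow> rexE k (s @ [PlusS] @ t) (L \<union> M)"
| T_F: "rexF k s L \<Longrightarrow> rexT k s L"
| T_conc: "rexT k s L \<Longrightarrow> rexF k t M \<Longrightarrow> rexT k (s @ t) (conc L M)"
| F_A: "rexA k s L \<Longrightarrow> rexF k s L"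
| F_star: "rexF k s L \<Longrightarrow> rexF k (s @ [StarS]) (kstar L)"
| A_empty: "rexA k [EmptyS] {}"
| A_eps: "rexA k [EpsS] {[]}"
| A_sym: "a < k \<Longrightarrow> rexA k [Sym a] {[a]}"
| A_par: "rexE k s L \<Longrightarrow> rexA k ([LParS] @ s @ [RParS]) L"

definition R :: "nat \<Rightarrow> nat \<Rightarrow> nat" where
  "R k n = card {L. \<exists>s. length s = n \<and> rexE k s L}"

end

theory Submission
  imports Defs
begin

lemmas rintros = rexE_rexT_rexF_rexA.intros

lemma rex_nonempty:
  shows "rexE k s L \<Longrightarrow> s \<noteq> []" and "rexT k s L \<Longrightarrow> s \<noteq> []"
    and "rexF k s L \<Longrightarrow> s \<noteq> []" and "rexA k s L \<Longrightarrow> s \<noteq> []"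
  by (induct rule: rexE_rexT_rexF_rexA.inducts) auto

definition Sig :: "nat \<Rightarrow> rsym set" where
  "Sig k = Sym ` {..<k} \<union> {PlusS, StarS, LParS, RParS, EpsS, EmptyS}"

lemma rex_sig:
  shows "rexE k s L \<Longrightarrow> set s \<subseteq> Sig k" and "rexT k s L \<Longrightarrow> set s \<subseteq> Sig k"
    and "rexF k s L \<Longrightarrow> set s \<subseteq> Sig k" and "rexA k s L \<Longrightarrow> set s \<subseteq> Sig k"
  by (induct rule: rexE_rexT_rexF_rexA.inducts) (auto simp: Sig_def)

definition "Es k s = {L. rexE k s L}"
definition "Ts k s = {L. rexT k s L}"
definition "Fs k s = {L. rexF k s L}"
definition "As k s = {L. rexA k s L}"

lemma A_sub: "As k s \<subseteq> {{}, {[]}} \<union> (\<lambda>a. {[a]}) ` (Sym -` set s) \<union> Es k (butlast (tl s))"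
  unfolding As_def Es_def
  by (auto elim: rexA.cases)

lemma F_sub: "Fs k s \<subseteq> As k s \<union> kstar ` Fs k (butlast s)"
  unfolding As_def Fs_def
  by (auto elim: rexF.cases)

lemma T_sub: "Ts k s \<subseteq> Fs k s \<union>
   (\<Union>i\<in>{1..<length s}. (\<lambda>(L,M). conc L M) ` (Ts k (take i s) \<times> Fs k (drop i s)))"
proof
  fix L assume "L \<in> Ts k s"
  then have "rexT k s L" by (simp add: Ts_def)
  then show "L \<in> Fs k s \<union>
   (\<Union>i\<in>{1..<length s}. (\<lambda>(L,M). conc L M) ` (Ts k (take i s) \<times> Fs k (drop i s)))"
  proof cases
    case (T_F)
    then show ?thesis by (simp add: Fs_def)
  next
    case (T_conc s1 L1 t M)
    then have "s1 \<noteq> []" "t \<noteq> []" using rex_nonempty by auto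
    then have "length s1 \<in> {1..<length s}" using T_conc by (cases s1; cases t) auto
    moreover have "(L1, M) \<in> Ts k (take (length s1) s) \<times> Fs k (drop (length s1) s)"
      using T_conc by (simp add: Ts_def Fs_def)
    ultimately show ?thesis using T_conc by blast
  qed
qed

lemma E_sub: "Es k s \<subseteq> Ts k s \<union>
   (\<Union>i\<in>{..<length s}. (\<lambda>(L,M). L \<union> M) ` (Es k (take i s) \<times> Ts k (drop (Suc i) s)))"
proof
  fix L assume "L \<in> Es k s"
  then have "rexE k s L" by (simp add: Es_def)
  then show "L \<in> Ts k s \<union>
   (\<Union>i\<in>{..<length s}. (\<lambda>(L,M). L \<union> M) ` (Es k (take i s) \<times> Ts k (drop (Suc i) s)))"
  proof cases
    case (E_T)
    then show ?thesis by (simp add: Ts_def)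
  next
    case (E_plus s1 L1 t M)
    then have "length s1 \<in> {..<length s}" by simp
    moreover have "(L1, M) \<in> Es k (take (length s1) s) \<times> Ts k (drop (Suc (length s1)) s)"
      using E_plus by (simp add: Ts_def Es_def)
    ultimately show ?thesis using E_plus by blast
  qed
qed

lemma fin_all: "finite (As k s) \<and> finite (Fs k s) \<and> finite (Ts k s) \<and> finite (Es k s)"
proof (induction s rule: length_induct)
  case (1 s)
  show ?case
  proof (cases "s = []")
    case True
    have "As k s = {}" "Fs k s = {}" "Ts k s = {}" "Es k s = {}"
      using True rex_nonempty[of k s] by (auto simp: As_def Fs_def Ts_def Es_def)
    then show ?thesis by simp
  next
    case False
    have IH: "\<And>ys. length ys < length s \<Longrightarrow>
      finite (As k ys) \<and> finite (Fs k ys) \<and> finite (Ts k ys) \<and> finite (Es k ys)"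
      using 1 by blast
    have fA: "finite (As k s)"
    proof (rule finite_subset[OF A_sub], intro finite_UnI)
      show "finite (Es k (butlast (tl s)))" using IH[of "butlast (tl s)"] False by simp
      show "finite ((\<lambda>a. {[a]}) ` (Sym -` set s))"
        by (intro finite_imageI finite_vimageI) (auto simp: inj_def)
    qed simp
    have fF: "finite (Fs k s)"
      using IH[of "butlast s"] False fA by (intro finite_subset[OF F_sub]) auto
    have fT: "finite (Ts k s)"
    proof (rule finite_subset[OF T_sub], intro finite_UnI fF finite_UN_I)
      fix i assume "i \<in> {1..<length s}"
      then show "finite ((\<lambda>(L,M). conc L M) ` (Ts k (take i s) \<times> Fs k (drop i s)))"
        using IH[of "take i s"] IH[of "drop i s"] by auto
    qed simp
    have fE: "finite (Es k s)"
    proof (rule finite_subset[OF E_sub], intro finite_UnI fT finite_UN_I)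
      fix i assume "i \<in> {..<length s}"
      then show "finite ((\<lambda>(L,M). L \<union> M) ` (Es k (take i s) \<times> Ts k (drop (Suc i) s)))"
        using IH[of "take i s"] IH[of "drop (Suc i) s"] by auto
    qed simp
    show ?thesis using fA fF fT fE by blast
  qed
qed

lemma finite_R: "finite {L. \<exists>s. length s = n \<and> rexE k s L}"
proof -
  have sub: "{L. \<exists>s. length s = n \<and> rexE k s L} \<subseteq> (\<Union>s\<in>{s. set s \<subseteq> Sig k \<and> length s = n}. Es k s)"
    using rex_sig(1) by (fastforce simp: Es_def)
  moreover have "finite (Sig k)" by (simp add: Sig_def)
  moreover have fu: "finite (\<Union>s\<in>{s. set s \<subseteq> Sig k \<and> length s = n}. Es k s)"
    using fin_all \<open>finite (Sig k)\<close> by (intro finite_UN_I finite_lists_length_eq) auto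
  show ?thesis by (rule finite_subset[OF sub fu])
qed

lemma R_ge:
  assumes "inj_on la X" "\<And>x. x \<in> X \<Longrightarrow> length (ex x) = n \<and> rexE k (ex x) (la x)"
  shows "card X \<le> R k n"
proof -
  have "card X = card (la ` X)" using assms(1) by (simp add: card_image)
  also have "\<dots> \<le> R k n" unfolding R_def
    by (rule card_mono[OF finite_R]) (use assms(2) in blast)
  finally show ?thesis .
qed

definition dR :: "nat \<Rightarrow> nat list set \<Rightarrow> nat list set" where
  "dR a X = {w. w @ [a] \<in> X}"

lemma dR_conc[simp]: "dR a (conc X {[b]}) = (if a = b then X else {})"
  by (auto simp: dR_def conc_def)

lemma dR_single[simp]: "dR a {[b]} = (if a = b then {[]} else {})"
  by (auto simp: dR_def)

lemma nil_conc[simp]: "[] \<notin> conc X {[b]}"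
  by (auto simp: conc_def)

lemma conc_ne[simp]: "conc X {[b]} \<noteq> {} \<longleftrightarrow> X \<noteq> {}"
  by (auto simp: conc_def)

section \<open>Unary\<close>

datatype u1 = P | Q

fun ex1 :: "u1 list \<Rightarrow> rsym list" where
  "ex1 [] = [Sym 0]"
| "ex1 (P # bs) = ex1 bs @ [Sym 0]"
| "ex1 (Q # bs) = [LParS] @ (ex1 bs @ [PlusS] @ [EpsS]) @ [RParS] @ [Sym 0]"

fun la1 :: "u1 list \<Rightarrow> nat list set" where
  "la1 [] = {[0]}"
| "la1 (P # bs) = conc (la1 bs) {[0]}"
| "la1 (Q # bs) = conc (la1 bs \<union> {[]}) {[0]}"

lemma ex1_rex: "rexT 1 (ex1 bs) (la1 bs)"
proof (induction bs rule: ex1.induct)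
  case 1
  show ?case unfolding ex1.simps la1.simps by (rule T_F, rule F_A, rule A_sym) simp
next
  case (2 bs)
  have a: "rexF 1 [Sym 0] {[0]}" by (rule F_A, rule A_sym) simp
  show ?case using T_conc[OF 2 a] by simp
next
  case (3 bs)
  have a: "rexF 1 [Sym 0] {[0]}" by (rule F_A, rule A_sym) simp
  have e: "rexT 1 [EpsS] {[]}" by (rule T_F, rule F_A, rule A_eps)
  have "rexE 1 (ex1 bs @ [PlusS] @ [EpsS]) (la1 bs \<union> {[]})"
    by (rule E_plus[OF E_T[OF 3] e])
  then have "rexT 1 ([LParS] @ (ex1 bs @ [PlusS] @ [EpsS]) @ [RParS]) (la1 bs \<union> {[]})"
    by (intro T_F F_A A_par)
  from T_conc[OF this a] show ?case by simp
qed

lemma la1_nil: "[] \<notin> la1 bs"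
  by (cases bs rule: ex1.cases) auto

lemma la1_ne: "la1 bs \<noteq> {}"
  by (induction bs rule: ex1.induct) auto

lemma aux1: assumes "[] \<notin> (X::nat list set)" "X \<noteq> {}"
  shows "{[]} \<noteq> X \<and> {[]} \<noteq> X \<union> {[]}"
proof -
  obtain x where x: "x \<in> X" using assms(2) by blast
  then have "x \<noteq> []" using assms(1) by auto
  then have "x \<notin> {[]}" by simp
  moreover have "x \<in> X \<union> {[]}" using x by simp
  ultimately have "{[]} \<noteq> X \<union> {[]}" by blast
  moreover have "{[]} \<noteq> X" using assms(1) by auto
  ultimately show ?thesis by simp
qed
lemma aux2: assumes "[] \<notin> (X::nat list set)" "[] \<notin> Y" "X \<union> {[]} = Y \<union> {[]}" shows "X = Y"
proof -
  have "X = (X \<union> {[]}) - {[]}" using assms(1) by auto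
  also have "\<dots> = (Y \<union> {[]}) - {[]}" using assms(3) by simp
  also have "\<dots> = Y" using assms(2) by auto
  finally show ?thesis .
qed
lemma aux3: "[] \<notin> (X::nat list set) \<Longrightarrow> X \<noteq> Y \<union> {[]}"
  by auto

lemma la1_inj: "la1 bs = la1 cs \<Longrightarrow> bs = cs"
proof (induction bs arbitrary: cs)
  case Nil
  then have d: "dR 0 (la1 []) = dR 0 (la1 cs)" by simp
  show ?case
  proof (cases cs)
    case (Cons c cs')
    then show ?thesis using d aux1[OF la1_nil[of cs'] la1_ne[of cs']]
      by (cases c) simp_all
  qed simp
next
  case (Cons b bs)
  then have d: "dR 0 (la1 (b # bs)) = dR 0 (la1 cs)" by simp
  show ?case
  proof (cases cs)
    case Nil
    then show ?thesis using d aux1[OF la1_nil[of bs] la1_ne[of bs]]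
      by (cases b) (simp_all add: eq_commute[of "{[]}"])
  next
    case (Cons c cs')
    then have "la1 bs = la1 cs' \<and> b = c" using d la1_nil[of bs] la1_nil[of cs']
        aux2[of "la1 bs" "la1 cs'"] aux3[of "la1 bs" "la1 cs'"] aux3[of "la1 cs'" "la1 bs"]
      by (cases b; cases c) auto
    then show ?thesis using Cons.IH Cons by simp
  qed
qed

lemma ex1_len: "length (ex1 bs) = 1 + (\<Sum>b\<leftarrow>bs. if b = P then 1 else 5)"
  by (induction bs rule: ex1.induct) auto


fun S1 :: "nat \<Rightarrow> u1 list set" where
  "S1 0 = {[]}"
| "S1 (Suc n) = Cons P ` S1 n \<union> (if 4 \<le> n then Cons Q ` S1 (n - 4) else {})"

lemma S1_len: "bs \<in> S1 n \<Longrightarrow> length (ex1 bs) = Suc n"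
proof (induction n arbitrary: bs rule: S1.induct)
  case 1 then show ?case by simp
next
  case (2 n) then show ?case by (auto split: if_splits)
qed

lemma S1_fin: "finite (S1 n)"
  by (induction n rule: S1.induct) auto

lemma S1_card: "card (S1 (Suc n)) = card (S1 n) + (if 4 \<le> n then card (S1 (n - 4)) else 0)"
proof -
  have d: "Cons P ` S1 n \<inter> Cons Q ` S1 (n - 4) = {}" by auto
  have "card (Cons P ` S1 n) = card (S1 n)" "card (Cons Q ` S1 (n-4)) = card (S1 (n-4))"
    by (auto intro: card_image simp: inj_on_def)
  then show ?thesis using card_Un_disjoint[OF _ _ d] S1_fin by auto
qed

lemma S1_pos: "card (S1 n) \<ge> 1"
proof (induction n)
  case 0 then show ?case by simp
next
  case (Suc n)
  have "card (S1 (Suc n)) \<ge> card (S1 n)" by (simp only: S1_card)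
  then show ?case using Suc by linarith
qed

lemma S1_bound: "(1.3247::real) ^ n \<le> 1.3247 ^ 4 * card (S1 n)"
proof (induction n rule: less_induct)
  case (less n)
  define b :: real where "b = 1.3247"
  have b1: "b \<ge> 1" by (simp add: b_def)
  show ?case
  proof (cases "n \<le> 4")
    case True
    have "b ^ n \<le> b ^ 4" using b1 True by (simp add: power_increasing)
    also have "\<dots> \<le> b ^ 4 * card (S1 n)" using S1_pos[of n] b1 by simp
    finally show ?thesis by (simp add: b_def)
  next
    case False
    then obtain m where m: "n = Suc m" "4 \<le> m" by (cases n) auto
    have h1: "b ^ m \<le> b ^ 4 * card (S1 m)" using less m by (simp add: b_def)
    have h2: "b ^ (m - 4) \<le> b ^ 4 * card (S1 (m - 4))" using less m by (simp add: b_def)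
    have key: "b ^ 5 \<le> b ^ 4 + 1" by (simp add: b_def power_divide)
    have "b ^ n = b ^ (m - 4) * b ^ 5"
      using m by (simp add: power_add[symmetric])
    also have "\<dots> \<le> b ^ (m - 4) * (b ^ 4 + 1)"
      using key b1 by (intro mult_left_mono) auto
    also have "\<dots> = b ^ m + b ^ (m - 4)"
      using m by (simp add: algebra_simps power_add[symmetric])
    also have "\<dots> \<le> b ^ 4 * card (S1 m) + b ^ 4 * card (S1 (m - 4))" using h1 h2 by simp
    also have "\<dots> = b ^ 4 * card (S1 n)"
    proof -
      have "card (S1 n) = card (S1 m) + card (S1 (m-4))" using m S1_card[of m] by (simp del: S1.simps)
      then show ?thesis by (simp add: algebra_simps)
    qed
    finally show ?thesis by (simp add: b_def)
  qed
qed

lemma R1_ge: "card (S1 n) \<le> R 1 (Suc n)"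
proof (rule R_ge[where la = la1 and ex = ex1])
  show "inj_on la1 (S1 n)" by (auto simp: inj_on_def intro: la1_inj)
  fix x assume "x \<in> S1 n"
  then show "length (ex1 x) = Suc n \<and> rexE 1 (ex1 x) (la1 x)"
    by (intro conjI S1_len E_T ex1_rex)
qed


section \<open>Binary\<close>

lemma kstar1: "v \<in> kstar {[a]} \<Longrightarrow> set v \<subseteq> {a}"
  by (induction rule: kstar.induct) auto

lemma kstar1_one: "[a] \<in> kstar {[a]}"
  using kstar_app[of "[a]" "{[a]}" "[]"] kstar_Nil by simp

lemma dR0_star: "a \<noteq> 0 \<Longrightarrow> dR 0 (conc Y (kstar {[a]})) = dR 0 Y"
proof
  assume a: "a \<noteq> 0"
  show "dR 0 (conc Y (kstar {[a]})) \<subseteq> dR 0 Y"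
  proof
    fix w assume "w \<in> dR 0 (conc Y (kstar {[a]}))"
    then obtain y v where yv: "w @ [0] = y @ v" "y \<in> Y" "v \<in> kstar {[a]}"
      by (auto simp: dR_def conc_def)
    have "v = []"
    proof (rule ccontr)
      assume "v \<noteq> []"
      then have "last v = 0" using yv(1) by (metis last_appendR last_snoc)
      moreover have "last v \<in> set v" using \<open>v \<noteq> []\<close> by simp
      ultimately show False using kstar1[OF yv(3)] a by auto
    qed
    then show "w \<in> dR 0 Y" using yv by (simp add: dR_def)
  qed
  show "dR 0 Y \<subseteq> dR 0 (conc Y (kstar {[a]}))"
    using kstar_Nil by (force simp: dR_def conc_def)
qed

lemma dR1_star: "y \<in> Y \<Longrightarrow> y \<in> dR a (conc Y (kstar {[a]}))"
  using kstar1_one[of a] by (force simp: dR_def conc_def)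

lemma nil_conc_star: "[] \<notin> Y \<Longrightarrow> [] \<notin> conc Y (kstar {[a]})"
  by (auto simp: conc_def)

lemma concC_ne: "x \<in> X \<Longrightarrow> x @ [0] \<in> dR a (conc (conc X {[0]}) (kstar {[a]}))"
  by (rule dR1_star) (auto simp: conc_def)

datatype u2 = A | B | C

fun ex2 :: "u2 list \<Rightarrow> rsym list" where
  "ex2 [] = [Sym 0]"
| "ex2 (A # bs) = ex2 bs @ [Sym 0]"
| "ex2 (B # bs) = ex2 bs @ [Sym 1]"
| "ex2 (C # bs) = (ex2 bs @ [Sym 0]) @ ([Sym 1] @ [StarS])"

fun la2 :: "u2 list \<Rightarrow> nat list set" where
  "la2 [] = {[0]}"
| "la2 (A # bs) = conc (la2 bs) {[0]}"
| "la2 (B # bs) = conc (la2 bs) {[1]}"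
| "la2 (C # bs) = conc (conc (la2 bs) {[0]}) (kstar {[1]})"

lemma ex2_rex: "rexT 2 (ex2 bs) (la2 bs)"
proof (induction bs rule: ex2.induct)
  case 1
  show ?case unfolding ex2.simps la2.simps by (rule T_F, rule F_A, rule A_sym) simp
next
  case (2 bs)
  have a: "rexF 2 [Sym 0] {[0]}" by (rule F_A, rule A_sym) simp
  show ?case using T_conc[OF 2 a] by simp
next
  case (3 bs)
  have a: "rexF 2 [Sym 1] {[1]}" by (rule F_A, rule A_sym) simp
  show ?case using T_conc[OF 3 a] by simp
next
  case (4 bs)
  have a: "rexF 2 [Sym 0] {[0]}" by (rule F_A, rule A_sym) simp
  have b: "rexF 2 [Sym 1] {[1]}" by (rule F_A, rule A_sym) simp
  have c: "rexF 2 ([Sym 1] @ [StarS]) (kstar {[1]})" by (rule F_star[OF b])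
  show ?case unfolding ex2.simps la2.simps by (rule T_conc[OF T_conc[OF 4 a] c])
qed

lemma la2_nil: "[] \<notin> la2 bs"
  by (cases bs rule: ex2.cases) (simp_all add: nil_conc_star)

lemma la2_ne: "la2 bs \<noteq> {}"
proof (induction bs rule: ex2.induct)
  case (4 bs)
  then obtain x where "x \<in> la2 bs" by blast
  from concC_ne[OF this, of 1] show ?case by (auto simp: dR_def)
qed auto

lemma dR2:
  "dR 0 (la2 []) = {[]}" "dR 1 (la2 []) = {}"
  "dR 0 (la2 (A # bs)) = la2 bs" "dR 1 (la2 (A # bs)) = {}"
  "dR 0 (la2 (B # bs)) = {}" "dR 1 (la2 (B # bs)) = la2 bs"
  "dR 0 (la2 (C # bs)) = la2 bs" "dR 1 (la2 (C # bs)) \<noteq> {}"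
proof -
  obtain x where "x \<in> la2 bs" using la2_ne[of bs] by blast
  from concC_ne[OF this, of 1] show "dR 1 (la2 (C # bs)) \<noteq> {}" by auto
qed (simp_all add: dR0_star)

lemma la2_inj: "la2 bs = la2 cs \<Longrightarrow> bs = cs"
proof (induction bs arbitrary: cs)
  case Nil
  then have d0: "dR 0 (la2 []) = dR 0 (la2 cs)" and d1: "dR 1 (la2 []) = dR 1 (la2 cs)" by simp_all
  show ?case
  proof (cases cs)
    case (Cons c cs')
    have "[] \<notin> la2 cs'" by (rule la2_nil)
    then show ?thesis using d0 d1 Cons dR2(8)[of cs']
      by (cases c) (auto simp: eq_commute[of "{[]}"] dR0_star)
  qed simp
next
  case (Cons b bs)
  then have d0: "dR 0 (la2 (b # bs)) = dR 0 (la2 cs)"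
    and d1: "dR 1 (la2 (b # bs)) = dR 1 (la2 cs)" by simp_all
  show ?case
  proof (cases cs)
    case Nil
    have "[] \<notin> la2 bs" by (rule la2_nil)
    then show ?thesis using d0 d1 Nil dR2(8)[of bs]
      by (cases b) (auto simp: eq_commute[of "{[]}"] dR0_star)
  next
    case (Cons c cs')
    have "la2 bs = la2 cs' \<and> b = c" using d0 d1 Cons dR2(8)[of bs] dR2(8)[of cs'] la2_ne[of bs] la2_ne[of cs']
      by (cases b; cases c) (auto simp: dR0_star)
    then show ?thesis using Cons.IH Cons by simp
  qed
qed

fun S2 :: "nat \<Rightarrow> u2 list set" where
  "S2 0 = {[]}"
| "S2 (Suc n) = Cons A ` S2 n \<union> Cons B ` S2 n \<union> (if 2 \<le> n then Cons C ` S2 (n - 2) else {})"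

lemma S2_len: "bs \<in> S2 n \<Longrightarrow> length (ex2 bs) = Suc n"
proof (induction n arbitrary: bs rule: S2.induct)
  case 1 then show ?case by simp
next
  case (2 n) then show ?case by (auto split: if_splits)
qed

lemma S2_fin: "finite (S2 n)"
  by (induction n rule: S2.induct) auto

lemma S2_card: "card (S2 (Suc n)) = 2 * card (S2 n) + (if 2 \<le> n then card (S2 (n - 2)) else 0)"
proof -
  have d1: "Cons A ` S2 n \<inter> Cons B ` S2 n = {}" by auto
  have d2: "(Cons A ` S2 n \<union> Cons B ` S2 n) \<inter> Cons C ` S2 (n - 2) = {}" by auto
  have c: "card (Cons A ` S2 n) = card (S2 n)" "card (Cons B ` S2 n) = card (S2 n)"
    "card (Cons C ` S2 (n-2)) = card (S2 (n-2))"
    by (auto intro: card_image simp: inj_on_def)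
  have "card (Cons A ` S2 n \<union> Cons B ` S2 n) = 2 * card (S2 n)"
    using card_Un_disjoint[OF _ _ d1] S2_fin c by auto
  then show ?thesis using card_Un_disjoint[OF _ _ d2] S2_fin c by auto
qed

lemma S2_pos: "card (S2 n) \<ge> 1"
proof (induction n)
  case 0 then show ?case by simp
next
  case (Suc n)
  have "card (S2 (Suc n)) \<ge> card (S2 n)" by (simp only: S2_card)
  then show ?case using Suc by linarith
qed

lemma S2_bound: "(2.102374::real) ^ n \<le> 2.102374 ^ 2 * card (S2 n)"
proof (induction n rule: less_induct)
  case (less n)
  define b :: real where "b = 2.102374"
  have b1: "b \<ge> 1" by (simp add: b_def)
  show ?case
  proof (cases "n \<le> 2")
    case True
    have "b ^ n \<le> b ^ 2" using b1 True by (simp add: power_increasing)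
    also have "\<dots> \<le> b ^ 2 * card (S2 n)" using S2_pos[of n] b1 by simp
    finally show ?thesis by (simp add: b_def)
  next
    case False
    then obtain m where m: "n = Suc m" "2 \<le> m" by (cases n) auto
    then obtain j where j: "m = j + 2" using le_Suc_ex by (metis add.commute)
    have h1: "b ^ m \<le> b ^ 2 * card (S2 m)" using less m by (simp add: b_def)
    have h2: "b ^ (m - 2) \<le> b ^ 2 * card (S2 (m - 2))" using less m by (simp add: b_def)
    have key: "b ^ 3 \<le> 2 * b ^ 2 + 1" by (simp add: b_def power_divide)
    have nj: "n = j + 3" "m - 2 = j" using m j by simp_all
    have "b ^ n = b ^ (m - 2) * b ^ 3"
      unfolding nj by (simp only: power_add)
    also have "\<dots> \<le> b ^ (m - 2) * (2 * b ^ 2 + 1)"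
      using key b1 by (intro mult_left_mono) auto
    also have "\<dots> = 2 * b ^ m + b ^ (m - 2)"
      using j by (simp add: algebra_simps power_add power2_eq_square)
    also have "\<dots> \<le> 2 * (b ^ 2 * card (S2 m)) + b ^ 2 * card (S2 (m - 2))" using h1 h2 by simp
    also have "\<dots> = b ^ 2 * card (S2 n)"
    proof -
      have "card (S2 n) = 2 * card (S2 m) + card (S2 (m-2))" using m S2_card[of m] by (simp del: S2.simps)
      then show ?thesis by (simp add: algebra_simps)
    qed
    finally show ?thesis by (simp add: b_def)
  qed
qed

lemma R2_ge: "card (S2 n) \<le> R 2 (Suc n)"
proof (rule R_ge[where la = la2 and ex = ex2])
  show "inj_on la2 (S2 n)" by (auto simp: inj_on_def intro: la2_inj)
  fix x assume "x \<in> S2 n"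
  then show "length (ex2 x) = Suc n \<and> rexE 2 (ex2 x) (la2 x)"
    by (intro conjI S2_len E_T ex2_rex)
qed

lemma omega_from:
  fixes b :: real
  assumes b: "b > 0" and c: "c > 0"
    and h: "\<And>n. b ^ n \<le> c * real (R k (Suc n))"
  shows "(\<lambda>n. real (R k n)) \<in> \<Omega>(\<lambda>n. b ^ n)"
proof (rule landau_omega.bigI[of "1 / (c * b)"])
  show "0 < 1 / (c * b)" using b c by simp
  show "\<forall>\<^sub>F n in at_top. norm (real (R k n)) \<ge> 1 / (c * b) * norm (b ^ n)"
  proof (rule eventually_mono[OF eventually_ge_at_top[of 1]])
    fix n :: nat assume "1 \<le> n"
    then obtain m where m: "n = Suc m" by (cases n) auto
    have "1 / (c * b) * norm (b ^ n) = b ^ m / c" using b c m by (simp add: field_simps)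
    also have "\<dots> \<le> real (R k n)" using h[of m] c m by (simp add: field_simps)
    finally show "norm (real (R k n)) \<ge> 1 / (c * b) * norm (b ^ n)" by simp
  qed
qed

theorem mainTheorem1:
  shows "(\<lambda>n. real (R 1 n)) \<in> \<Omega>(\<lambda>n. 1.3247 ^ n) \<and>
         (\<lambda>n. real (R 2 n)) \<in> \<Omega>(\<lambda>n. 2.102374 ^ n)"
proof
  show "(\<lambda>n. real (R 1 n)) \<in> \<Omega>(\<lambda>n. 1.3247 ^ n)"
  proof (rule omega_from[of _ "1.3247 ^ 4"])
    fix n
    have "(1.3247::real) ^ n \<le> 1.3247 ^ 4 * card (S1 n)" by (rule S1_bound)
    also have "\<dots> \<le> 1.3247 ^ 4 * real (R 1 (Suc n))" using R1_ge[of n] by simp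
    finally show "(1.3247::real) ^ n \<le> 1.3247 ^ 4 * real (R 1 (Suc n))" .
  qed simp_all
  show "(\<lambda>n. real (R 2 n)) \<in> \<Omega>(\<lambda>n. 2.102374 ^ n)"
  proof (rule omega_from[of _ "2.102374 ^ 2"])
    fix n
    have "(2.102374::real) ^ n \<le> 2.102374 ^ 2 * card (S2 n)" by (rule S2_bound)
    also have "\<dots> \<le> 2.102374 ^ 2 * real (R 2 (Suc n))" using R2_ge[of n] by simp
    finally show "(2.102374::real) ^ n \<le> 2.102374 ^ 2 * real (R 2 (Suc n))" .
  qed simp_all
qed

end
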